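(* Let $A$ be a finite alphabet, $\gamma\in(0,1]$, and let $q_\gamma$ be the map associated with the shuffle Hopf algebra $\mathcal H^A_{\sqcup\!\sqcup}$ with its basis of words. There exists a constant $C_\gamma\ge1$ depending only on $\gamma$ such that for every nonempty word $w\in A^*$, $$|q_\gamma(w)|\le\frac{C_\gamma^{|w|-1}}{(|w|!)^{\gamma}}.$$
   Context: $\mathcal H^A_{\sqcup\!\sqcup}$ is the vector space with basis the set $A^*$ of words on $A$ (including the empty word $\mathbf 1$), graded by word length $|w|$, with shuffle product ($\mathbf 1\sqcup\!\sqcup w=w\sqcup\!\sqcup\mathbf 1=w$, $(av)\sqcup\!\sqcup(bw)=a(v\sqcup\!\sqcup bw)+b(av\sqcup\!\sqcup w)$ for letters $a,b$) and deconcatenation coproduct $\Delta(w)=\sum_{uv=w}u\otimes v$. Its inverse-factorial character is $q(w)=1/|w|!$. Let $N=\lfloor1/\gamma\rfloor$. The linear map $q_\gamma$ is defined on words by $q_\gamma(w)=q(w)=1/|w|!$ if $|w|\le N$ and recursively $q_\gamma(w)=\frac{1}{2^{\gamma|w|}-2}\sum_{uv=w,\ u,v\ne\mathbf 1}q_\gamma(u)q_\gamma(v)$ if $|w|\ge N+1$. *)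

theory Defs
  imports Complex_Main
begin

text \<open>Words over the alphabet are lists; the empty word is []. The sum over
  deconcatenations w = uv with u, v nonempty is indexed by the split point k.\<close>

function q_gamma :: "real \<Rightarrow> 'a list \<Rightarrow> real" where
  "q_gamma \<gamma> w =
     (if length w \<le> nat \<lfloor>1 / \<gamma>\<rfloor> then 1 / fact (length w)
      else (1 / (2 powr (\<gamma> * real (length w)) - 2)) *
           (\<Sum>k\<in>{1..<length w}. q_gamma \<gamma> (take k w) * q_gamma \<gamma> (drop k w)))"
  by auto
termination
  by (relation "measure (\<lambda>(\<gamma>, w). length w)") auto

end

theory Submission
  imports Defs "HOL-Analysis.Analysis"
begin

function Q :: "real \<Rightarrow> nat \<Rightarrow> real" where
  "Q g n = (if n \<le> nat \<lfloor>1 / g\<rfloor> then 1 / fact n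
      else (1 / (2 powr (g * real n) - 2)) * (\<Sum>k\<in>{1..<n}. Q g k * Q g (n - k)))"
  by auto
termination by (relation "Wellfounded.measure (\<lambda>(g, n). n)") auto

declare Q.simps[simp del] q_gamma.simps[simp del]

lemma q_eq_Q: "q_gamma g w = Q g (length w)"
proof (induction "length w" arbitrary: w rule: less_induct)
  case less
  have s: "(\<Sum>k\<in>{1..<length w}. q_gamma g (take k w) * q_gamma g (drop k w))
        = (\<Sum>k\<in>{1..<length w}. Q g k * Q g (length w - k))"
  proof (rule sum.cong)
    fix k assume k: "k \<in> {1..<length w}"
    have a: "q_gamma g (take k w) = Q g k" using less[of "take k w"] k by auto
    have "length w - k < length w" using k by auto
    then have b: "q_gamma g (drop k w) = Q g (length w - k)" using less[of "drop k w"] by auto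
    show "q_gamma g (take k w) * q_gamma g (drop k w) = Q g k * Q g (length w - k)"
      using a b by simp
  qed simp
  show ?case
    apply (subst q_gamma.simps) apply (subst Q.simps) using s by simp
qed


lemma choose_sum_le: "(\<Sum>k\<in>{1..<n}. real (n choose k)) \<le> 2 ^ n"
proof -
  have "(\<Sum>k\<in>{1..<n}. real (n choose k)) \<le> (\<Sum>k\<in>{..n}. real (n choose k))"
    by (rule sum_mono2) auto
  also have "\<dots> = 2 ^ n" using choose_row_sum[of n] by (metis of_nat_numeral of_nat_power of_nat_sum)
  finally show ?thesis .
qed

lemma core_lt1:
  fixes g :: real
  assumes g0: "0 < g" and g1: "g < 1"
  defines "q \<equiv> 1 / (1 - g)"
  defines "S \<equiv> suminf (\<lambda>k::nat. real k powr (- q))"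
  shows "(\<Sum>k\<in>{1..<n}. real (n choose k) powr g / real k) \<le> (g + (1 - g) * S) * 2 powr (g * real n)"
proof -
  have q1: "q > 1" using g0 g1 unfolding q_def by (simp add: field_simps)
  have summ: "summable (\<lambda>k::nat. real k powr (- q))"
    using q1 summable_real_powr_iff by simp
  have Sb: "(\<Sum>k\<in>{1..<n}. real k powr (- q)) \<le> S"
    unfolding S_def by (rule sum_le_suminf[OF summ]) auto
  have trm: "real (n choose k) powr g / real k \<le> 2 powr (g * real n) *
      (g * (real (n choose k) / 2 ^ n) + (1 - g) * real k powr (- q))" if k: "k \<in> {1..<n}" for k
  proof -
    define p where "p = real (n choose k) / 2 ^ n"
    define a where "a = real k powr (- q)"
    have p0: "p > 0" unfolding p_def using k by simp
    have a0: "a > 0" unfolding a_def using k by simp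
    have ya: "p powr g * a powr (1 - g) \<le> g * p + (1 - g) * a"
      by (rule Youngs_inequality_0) (use g0 g1 p0 a0 in auto)
    have e1: "a powr (1 - g) = 1 / real k"
    proof -
      have "a powr (1 - g) = real k powr (- q * (1 - g))" unfolding a_def by (simp add: powr_powr)
      also have "- q * (1 - g) = -1" unfolding q_def using g1 by simp
      finally show ?thesis using k by (simp add: powr_minus_divide)
    qed
    have e2: "p powr g = real (n choose k) powr g / 2 powr (g * real n)"
      unfolding p_def by (simp add: powr_divide powr_realpow[symmetric] powr_powr mult.commute)
    have "real (n choose k) powr g / real k = 2 powr (g * real n) * (p powr g * a powr (1 - g))"
      using e1 e2 by simp
    also have "\<dots> \<le> 2 powr (g * real n) * (g * p + (1 - g) * a)"
      using ya by (simp add: mult_left_mono)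
    finally show ?thesis unfolding p_def a_def .
  qed
  have "(\<Sum>k\<in>{1..<n}. real (n choose k) powr g / real k) \<le>
      (\<Sum>k\<in>{1..<n}. 2 powr (g * real n) *
      (g * (real (n choose k) / 2 ^ n) + (1 - g) * real k powr (- q)))"
    by (rule sum_mono) (rule trm)
  also have "\<dots> = 2 powr (g * real n) * (g * ((\<Sum>k\<in>{1..<n}. real (n choose k)) / 2 ^ n)
      + (1 - g) * (\<Sum>k\<in>{1..<n}. real k powr (- q)))"
    by (simp add: sum_distrib_left sum.distrib sum_divide_distrib distrib_left)
  also have "\<dots> \<le> 2 powr (g * real n) * (g * 1 + (1 - g) * S)"
  proof -
    have "(\<Sum>k\<in>{1..<n}. real (n choose k)) / 2 ^ n \<le> 1" using choose_sum_le[of n] by simp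
    then show ?thesis using Sb g0 g1
      by (intro mult_left_mono add_mono mult_left_mono) auto
  qed
  finally show ?thesis by (simp add: mult.commute)
qed


lemma core:
  fixes g :: real
  assumes g0: "0 < g" and g1: "g \<le> 1"
  shows "\<exists>K\<ge>0. \<forall>n. (\<Sum>k\<in>{1..<n}. real (n choose k) powr g / real k) \<le> K * 2 powr (g * real n)"
proof (cases "g = 1")
  case True
  show ?thesis
  proof (intro exI[of _ 1] conjI allI)
    fix n
    have "(\<Sum>k\<in>{1..<n}. real (n choose k) powr g / real k) \<le> (\<Sum>k\<in>{1..<n}. real (n choose k))"
      using True by (intro sum_mono) (auto simp: divide_le_eq)
    also have "\<dots> \<le> 2 ^ n" by (rule choose_sum_le)
    finally show "(\<Sum>k\<in>{1..<n}. real (n choose k) powr g / real k) \<le> 1 * 2 powr (g * real n)"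
      using True by (simp add: powr_realpow)
  qed simp
next
  case False
  then have g1': "g < 1" using g1 by simp
  define S where "S = suminf (\<lambda>k::nat. real k powr (- (1 / (1 - g))))"
  have q1: "1 / (1 - g) > 1" using g0 g1' by (simp add: field_simps)
  have summ: "summable (\<lambda>k::nat. real k powr (- (1 / (1 - g))))"
    using q1 summable_real_powr_iff by simp
  have S0: "S \<ge> 0" unfolding S_def
    by (rule suminf_nonneg[OF summ]) simp
  have B: "\<forall>n. (\<Sum>k\<in>{1..<n}. real (n choose k) powr g / real k) \<le> (g + (1 - g) * S) * 2 powr (g * real n)"
    using core_lt1[OF g0 g1'] unfolding S_def by blast
  have "g + (1 - g) * S \<ge> 0" using S0 g0 g1' by simp
  then show ?thesis using B by blast
qed

lemma core2:
  fixes g K :: real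
  assumes "\<forall>n. (\<Sum>k\<in>{1..<n}. real (n choose k) powr g / real k) \<le> K * 2 powr (g * real n)"
  shows "(\<Sum>k\<in>{1..<n}. real (n choose k) powr g * (real n / (real k * real (n - k))))
     \<le> 2 * K * 2 powr (g * real n)"
proof -
  have "(\<Sum>k\<in>{1..<n}. real (n choose k) powr g * (real n / (real k * real (n - k))))
     = (\<Sum>k\<in>{1..<n}. real (n choose k) powr g / real k) +
       (\<Sum>k\<in>{1..<n}. real (n choose (n - k)) powr g / real (n - k))"
    unfolding sum.distrib[symmetric]
  proof (rule sum.cong)
    fix k assume k: "k \<in> {1..<n}"
    then have "real n / (real k * real (n - k)) = 1 / real k + 1 / real (n - k)"
      by (simp add: field_simps of_nat_diff)
    then show "real (n choose k) powr g * (real n / (real k * real (n - k))) =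
        real (n choose k) powr g / real k + real (n choose (n - k)) powr g / real (n - k)"
    proof -
      have "n choose (n - k) = n choose k" using k by (simp add: binomial_symmetric[symmetric])
      then show ?thesis using \<open>real n / (real k * real (n - k)) = 1 / real k + 1 / real (n - k)\<close>
        by (simp add: distrib_left divide_inverse)
    qed
  qed simp
  also have "(\<Sum>k\<in>{1..<n}. real (n choose (n - k)) powr g / real (n - k))
      = (\<Sum>k\<in>{1..<n}. real (n choose k) powr g / real k)"
    by (rule sum.reindex_bij_witness[where i="\<lambda>k. n - k" and j="\<lambda>k. n - k"]) auto
  finally show ?thesis using assms by simp
qed


lemma n_le_pow: "n \<ge> 1 \<Longrightarrow> real n \<le> 2 ^ (n - 1)"
proof (induction n)
  case (Suc m)
  show ?case
  proof (cases "m = 0")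
    case False
    then obtain j where j: "m = Suc j" by (cases m) auto
    have "real m \<le> 2 ^ j" using Suc j by simp
    moreover have "(1::real) \<le> 2 ^ j" by simp
    ultimately show ?thesis using j by simp
  qed simp
qed simp

lemma fact_split:
  assumes "k \<le> n"
  shows "(fact n :: real) powr g = real (n choose k) powr g * (fact k powr g * fact (n - k) powr g)"
proof -
  have "(fact n :: real) = real (n choose k) * (fact k * fact (n - k))"
    using binomial_fact_lemma[OF assms] by (metis mult.commute of_nat_fact of_nat_mult)
  then show ?thesis by (simp add: powr_mult)
qed

lemma term_bound:
  fixes C g :: real
  assumes C: "C \<ge> 1" and k: "1 \<le> k" "k < n"
    and a0: "0 \<le> a" and ak: "a * fact k powr g * real k \<le> C ^ (k - 1)"
    and b0: "0 \<le> b" and bk: "b * fact (n - k) powr g * real (n - k) \<le> C ^ (n - k - 1)"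
  shows "a * b * (fact n powr g * real n) \<le> C ^ (n - 2) * (real (n choose k) powr g * (real n / (real k * real (n - k))))"
proof -
  define fk where "fk = (fact k :: real) powr g * real k"
  define fm where "fm = (fact (n - k) :: real) powr g * real (n - k)"
  have fk0: "fk > 0" unfolding fk_def using k by simp
  have fm0: "fm > 0" unfolding fm_def using k by simp
  have "a * b * (fk * fm) \<le> C ^ (k - 1) * C ^ (n - k - 1)"
  proof -
    have "a * b * (fk * fm) = (a * fk) * (b * fm)" by simp
    also have "\<dots> \<le> C ^ (k - 1) * C ^ (n - k - 1)"
      using ak bk a0 b0 fk0 fm0 C unfolding fk_def fm_def
      by (intro mult_mono) (auto simp: mult.assoc)
    finally show ?thesis .
  qed
  also have "C ^ (k - 1) * C ^ (n - k - 1) = C ^ (n - 2)"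
    using k by (simp add: power_add[symmetric])
  finally have 1: "a * b \<le> C ^ (n - 2) / (fk * fm)" using fk0 fm0 by (simp add: field_simps)
  have "fact n powr g * real n = real (n choose k) powr g * (real n / (real k * real (n - k))) * (fk * fm)"
    using fact_split[of k n g] k fk0 fm0 unfolding fk_def fm_def by (simp add: field_simps)
  then have "a * b * (fact n powr g * real n) = a * b * (fk * fm) * (real (n choose k) powr g * (real n / (real k * real (n - k))))"
    by simp
  also have "\<dots> \<le> C ^ (n - 2) * (real (n choose k) powr g * (real n / (real k * real (n - k))))"
    using 1 fk0 fm0 by (intro mult_right_mono) (auto simp: field_simps)
  finally show ?thesis .
qed


lemma Q_bound:
  fixes g :: real
  assumes g0: "0 < g" and g1: "g \<le> 1"
  shows "\<exists>C\<ge>1. \<forall>n\<ge>1. 0 \<le> Q g n \<and> Q g n * (fact n powr g * real n) \<le> C ^ (n - 1)"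
proof -
  obtain K where K0: "K \<ge> 0" and KK: "\<forall>n. (\<Sum>k\<in>{1..<n}. real (n choose k) powr g / real k) \<le> K * 2 powr (g * real n)"
    using core[OF g0 g1] by blast
  define N where "N = nat \<lfloor>1 / g\<rfloor>"
  have ig: "1 / g \<ge> 1" using g0 g1 by (simp add: field_simps)
  have fl: "\<lfloor>1 / g\<rfloor> \<ge> 1" using ig by (metis floor_mono floor_one)
  have N1: "N \<ge> 1" unfolding N_def using nat_mono[OF fl] by simp
  have rN: "real N = of_int \<lfloor>1 / g\<rfloor>" unfolding N_def by (rule of_nat_nat) (use fl in linarith)
  have "1 / g < real N + 1" unfolding rN by (simp add: real_of_int_floor_add_one_gt)
  then have gN: "g * (real N + 1) > 1" using g0 by (simp add: field_simps)
  define c where "c = 1 - 2 powr (1 - g * (real N + 1))"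
  have "2 powr (1 - g * (real N + 1)) < 2 powr 0" by (rule powr_less_mono) (use gN in auto)
  then have c0: "c > 0" unfolding c_def by simp
  have Dn: "2 powr (g * real n) - 2 \<ge> c * 2 powr (g * real n)" if n: "n > N" for n
  proof -
    have "real n \<ge> real N + 1" using n by simp
    then have "g * real n + (1 - g * (real N + 1)) \<ge> 1" using g0
      by (smt (verit, best) mult_left_mono)
    then have "2 powr 1 \<le> 2 powr (g * real n + (1 - g * (real N + 1)))" by (rule powr_mono) auto
    then have "2 \<le> 2 powr (g * real n) * 2 powr (1 - g * (real N + 1))" by (simp add: powr_add)
    then show ?thesis unfolding c_def by (simp add: algebra_simps)
  qed
  define C where "C = max 2 (2 * K / c)"
  have C1: "C \<ge> 1" unfolding C_def by simp
  have C2: "C \<ge> 2 * K / c" unfolding C_def by simp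
  have main: "n \<ge> 1 \<longrightarrow> 0 \<le> Q g n \<and> Q g n * (fact n powr g * real n) \<le> C ^ (n - 1)" for n
  proof (induction n rule: less_induct)
    case (less n)
    show ?case
    proof
      assume n1: "n \<ge> 1"
      show "0 \<le> Q g n \<and> Q g n * (fact n powr g * real n) \<le> C ^ (n - 1)"
      proof (cases "n \<le> N")
        case True
        then have Qn: "Q g n = 1 / fact n" by (subst Q.simps) (simp add: N_def)
        have f1: "(fact n :: real) \<ge> 1" by simp
        have "(fact n :: real) powr g \<le> fact n powr 1" by (rule powr_mono) (use g1 f1 in auto)
        then have "(fact n :: real) powr g \<le> fact n" using f1 by simp
        then have "Q g n * (fact n powr g * real n) \<le> real n"
        proof -
          have "real n * fact n powr g \<le> real n * fact n"
            using \<open>(fact n :: real) powr g \<le> fact n\<close> by (simp add: mult_left_mono)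
          then show ?thesis unfolding Qn using f1 by (simp add: field_simps)
        qed
        also have "\<dots> \<le> 2 ^ (n - 1)" using n_le_pow n1 by simp
        also have "\<dots> \<le> C ^ (n - 1)" by (rule power_mono) (auto simp: C_def)
        finally show ?thesis using Qn by simp
      next
        case False
        then have nN: "n > N" by simp
        have D: "2 powr (g * real n) - 2 \<ge> c * 2 powr (g * real n)" using Dn nN by simp
        have Dpos: "2 powr (g * real n) - 2 > 0" using D c0 by (smt (verit) mult_pos_pos powr_gt_zero)
        have Qn: "Q g n = (1 / (2 powr (g * real n) - 2)) * (\<Sum>k\<in>{1..<n}. Q g k * Q g (n - k))"
          using False by (subst Q.simps) (simp add: N_def)
        have IH: "0 \<le> Q g m \<and> Q g m * (fact m powr g * real m) \<le> C ^ (m - 1)" if "1 \<le> m" "m < n" for m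
          using less that by blast
        have sum0: "0 \<le> (\<Sum>k\<in>{1..<n}. Q g k * Q g (n - k))"
          by (rule sum_nonneg) (use IH in auto)
        have "(\<Sum>k\<in>{1..<n}. Q g k * Q g (n - k)) * (fact n powr g * real n)
            = (\<Sum>k\<in>{1..<n}. Q g k * Q g (n - k) * (fact n powr g * real n))"
          by (simp add: sum_distrib_right)
        also have "\<dots> \<le> (\<Sum>k\<in>{1..<n}. C ^ (n - 2) * (real (n choose k) powr g * (real n / (real k * real (n - k)))))"
        proof (rule sum_mono)
          fix k assume k: "k \<in> {1..<n}"
          have a: "0 \<le> Q g k \<and> Q g k * (fact k powr g * real k) \<le> C ^ (k - 1)" using IH k by auto
          have b: "0 \<le> Q g (n - k) \<and> Q g (n - k) * (fact (n - k) powr g * real (n - k)) \<le> C ^ (n - k - 1)"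
            using IH[of "n - k"] k by auto
          show "Q g k * Q g (n - k) * (fact n powr g * real n) \<le> C ^ (n - 2) * (real (n choose k) powr g * (real n / (real k * real (n - k))))"
            by (rule term_bound) (use C1 k a b in \<open>auto simp: mult.assoc\<close>)
        qed
        also have "\<dots> = C ^ (n - 2) * (\<Sum>k\<in>{1..<n}. real (n choose k) powr g * (real n / (real k * real (n - k))))"
          by (simp add: sum_distrib_left)
        also have "\<dots> \<le> C ^ (n - 2) * (2 * K * 2 powr (g * real n))"
          by (rule mult_left_mono[OF core2[OF KK]]) (use C1 in simp)
        finally have S: "(\<Sum>k\<in>{1..<n}. Q g k * Q g (n - k)) * (fact n powr g * real n) \<le> C ^ (n - 2) * (2 * K * 2 powr (g * real n))" .
        have "Q g n * (fact n powr g * real n) = (\<Sum>k\<in>{1..<n}. Q g k * Q g (n - k)) * (fact n powr g * real n) / (2 powr (g * real n) - 2)"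
          unfolding Qn by simp
        also have "\<dots> \<le> C ^ (n - 2) * (2 * K * 2 powr (g * real n)) / (2 powr (g * real n) - 2)"
          by (rule divide_right_mono[OF S]) (use Dpos in simp)
        also have "\<dots> \<le> C ^ (n - 2) * (2 * K * 2 powr (g * real n)) / (c * 2 powr (g * real n))"
        proof -
          have nn: "0 \<le> C ^ (n - 2) * (2 * K * 2 powr (g * real n))" using C1 K0 by simp
          have pp: "0 < (2 powr (g * real n) - 2) * (c * 2 powr (g * real n))"
            using Dpos c0 by (intro mult_pos_pos) auto
          show ?thesis by (rule divide_left_mono[OF D nn pp])
        qed
        also have "\<dots> = C ^ (n - 2) * (2 * K / c)" by simp
        also have "\<dots> \<le> C ^ (n - 2) * C" by (rule mult_left_mono[OF C2]) (use C1 in simp)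
        also have "\<dots> = C ^ (n - 1)"
        proof -
          have "n - 1 = Suc (n - 2)" using nN N1 by simp
          then show ?thesis by (simp add: mult.commute)
        qed
        finally have B: "Q g n * (fact n powr g * real n) \<le> C ^ (n - 1)" .
        have "0 \<le> Q g n" unfolding Qn using sum0 Dpos by simp
        with B show ?thesis by blast
      qed
    qed
  qed
  show ?thesis using main C1 by blast
qed

theorem mainTheorem5:
  fixes \<gamma> :: real
  assumes "0 < \<gamma>" and "\<gamma> \<le> 1"
  shows "\<exists>C \<ge> 1. \<forall>A :: 'a set. finite A \<longrightarrow>
           (\<forall>w. w \<noteq> [] \<and> set w \<subseteq> A \<longrightarrow>
              \<bar>q_gamma \<gamma> w\<bar> \<le> C ^ (length w - 1) / (fact (length w)) powr \<gamma>)"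
proof -
  obtain C where C1: "C \<ge> 1" and CC: "\<forall>n\<ge>1. 0 \<le> Q \<gamma> n \<and> Q \<gamma> n * (fact n powr \<gamma> * real n) \<le> C ^ (n - 1)"
    using Q_bound[OF assms] by blast
  have "\<bar>q_gamma \<gamma> w\<bar> \<le> C ^ (length w - 1) / (fact (length w)) powr \<gamma>" if w: "w \<noteq> []" for w :: "'a list"
  proof -
    define n where "n = length w"
    have n1: "n \<ge> 1" using w unfolding n_def by (cases w) auto
    have a: "0 \<le> Q \<gamma> n" and b: "Q \<gamma> n * (fact n powr \<gamma> * real n) \<le> C ^ (n - 1)" using CC n1 by auto
    have fp: "(fact n :: real) powr \<gamma> > 0" by simp
    have "Q \<gamma> n * fact n powr \<gamma> \<le> Q \<gamma> n * (fact n powr \<gamma> * real n)"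
      using a fp n1 by (simp add: mult_left_mono)
    then have "Q \<gamma> n * fact n powr \<gamma> \<le> C ^ (n - 1)" using b by linarith
    then have "Q \<gamma> n \<le> C ^ (n - 1) / fact n powr \<gamma>" using fp by (simp add: field_simps)
    then show ?thesis using a unfolding q_eq_Q n_def[symmetric] by simp
  qed
  then show ?thesis using C1 by blast
qed

end
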